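(* Let there be $H$ layers; at each layer $h\in\{1,\dots,H\}$ observed data $x_1^{(h)},\dots,x_N^{(h)}$ are modeled by a $K$-component mixture $p(x_n^{(h)}\mid\mathbf{p}_n^{(h)};\mathbf{a}^{(h)})=\sum_{k=1}^K p^{(h)}_{n,k}\pi^{(h)}_k(x^{(h)}_n;a^{(h)}_k)$ with mixing probabilities $\mathbf{p}_n^{(h)}\in\Delta^K$, completed by latent classes $C_n^{(h)}\in\{1,\dots,K\}$ and Dirichlet prior parameters $\mathbf{B}_n^{(h)}\in\mathbb{R}^K$, with completed log-posterior for layer $h$ $$\ell^{(h)}=\sum_{n=1}^N\ln\mathrm{Dir}(\mathbf{p}^{(h)}_n\mid\mathbf{B}^{(h)}_n)+\sum_{n=1}^N\sum_{k=1}^K\delta_k^{C^{(h)}_n}\big[\ln p^{(h)}_{n,k}+\ln\pi^{(h)}_k(x^{(h)}_n;a^{(h)}_k)\big],$$ where $\mathrm{Dir}(\mathbf{p}\mid\mathbf{b})=\frac{\Gamma(\sum_k b_k)}{\prod_k\Gamma(b_k)}\prod_k p_k^{b_k-1}$. For all $(n,k,h)$, let $f^{(h)}_{n,k}:\mathbb{R}^{NH}\to\mathbb{R}$ be any linear function such that $f^{(h)}_{n,k}([0,+\infty[^{NH})\subset\mathbb{R}_+$, and set $$\mathbf{B}^{(h)}_n=\Big(f^{(h)}_{n,1}\big(\delta_1^{C^{(1)}_\cdot},\dots,\delta_1^{C^{(H)}_\cdot}\big)-\delta_1^{C^{(h)}_n}+1,\ \dots,\ f^{(h)}_{n,K}\big(\delta_K^{C^{(1)}_\cdot},\dots,\delta_K^{C^{(H)}_\cdot}\big)-\delta_K^{C^{(h)}_n}+1\Big),$$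 where $\delta_k^{C^{(h)}_\cdot}=(\delta_k^{C^{(h)}_1},\dots,\delta_k^{C^{(h)}_N})$. Then, in the EM algorithm (E-step: conditional expectation of $\ell^{(h)}$ given all data $((x^{(h')}_n)_n)_{h'}$ and previous estimates $(\boldsymbol\theta^{(t,h')})_{h'}$; M-step: maximization subject to $\mathbf{p}^{(h)}_n\in\Delta^K$), the mixing probability updates of layer $h$ are, for all $(n,k,h)$, $$p^{(t+1,h)}_{n,k}=\frac{f^{(h)}_{n,k}(\tau^{(t,1)}_{\cdot,k},\dots,\tau^{(t,H)}_{\cdot,k})}{\sum_{k'=1}^K f^{(h)}_{n,k'}(\tau^{(t,1)}_{\cdot,k'},\dots,\tau^{(t,H)}_{\cdot,k'})},$$ where $\tau^{(t,h)}_{n,k}=P(C^{(h)}_n=k\mid x^{(h)}_n,\boldsymbol\theta^{(t,h)})$ is the posterior probability of component $k$ for sample $x^{(h)}_n$ at the previous E-step, $\boldsymbol\theta^{(t,h)}$ is the previous parameter estimate at layer $h$, and $\tau^{(t,h)}_{\cdot,k}=(\tau^{(t,h)}_{1,k},\dots,\tau^{(t,h)}_{N,k})$.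
   Context: $\Delta^K$ denotes the $K$-dimensional probability simplex; $\delta_i^j$ is the Kronecker symbol; $\boldsymbol\theta^{(h)}=((\mathbf{p}^{(h)}_n)_n,\mathbf{a}^{(h)})$ are the parameters of layer $h$. The classes of different layers are treated as conditionally independent given the data and previous parameters, with $\tau^{(t,h)}_{n,k}=p^{(t,h)}_{n,k}\pi^{(h)}_k(x^{(h)}_n;a^{(t,h)}_k)/\sum_j p^{(t,h)}_{n,j}\pi^{(h)}_j(x^{(h)}_n;a^{(t,h)}_j)$. *)

theory Defs
  imports "HOL-Analysis.Analysis"
begin

text \<open>Conventions. Layers h, samples n, components k are 0-based:
  h < H, n < N, k < K. A class configuration for all layers is
  c :: nat => nat => nat with c h n the class of sample n aprev layer h.\<close>

definition kron :: "nat \<Rightarrow> nat \<Rightarrow> real" where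
  "kron i j = (if i = j then 1 else 0)"

definition lnE :: "real \<Rightarrow> ereal" where
  "lnE x = (if x > 0 then ereal (ln x) else - \<infinity>)"

definition prob_simplex :: "nat \<Rightarrow> (nat \<Rightarrow> real) set" where
  "prob_simplex K = {q. (\<forall>k<K. 0 \<le> q k) \<and> (\<Sum>k<K. q k) = 1}"

text \<open>A linear map R^(N H) -> R, where vectors of R^(N H) are represented as
  v :: nat => nat => real with coordinates v h n (h < H, n < N); the map only
  depends on these coordinates and is additive and homogeneous.\<close>
definition linear_grid :: "nat \<Rightarrow> nat \<Rightarrow> ((nat \<Rightarrow> nat \<Rightarrow> real) \<Rightarrow> real) \<Rightarrow> bool" where
  "linear_grid H N g \<longleftrightarrow>
     (\<forall>u v. (\<forall>h<H. \<forall>n<N. u h n = v h n) \<longrightarrow> g u = g v) \<and>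
     (\<forall>u v. g (\<lambda>h n. u h n + v h n) = g u + g v) \<and>
     (\<forall>c u. g (\<lambda>h n. c * u h n) = c * g u)"

definition nonneg_grid :: "nat \<Rightarrow> nat \<Rightarrow> ((nat \<Rightarrow> nat \<Rightarrow> real) \<Rightarrow> real) \<Rightarrow> bool" where
  "nonneg_grid H N g \<longleftrightarrow> (\<forall>u. (\<forall>h<H. \<forall>n<N. 0 \<le> u h n) \<longrightarrow> 0 \<le> g u)"

definition dir_norm :: "nat \<Rightarrow> (nat \<Rightarrow> real) \<Rightarrow> real" where
  "dir_norm K b = Gamma (\<Sum>k<K. b k) / (\<Prod>k<K. Gamma (b k))"

text \<open>Posterior class probabilities tau^(t,h)_(n,k) from the previous parameters
  pprev h n k = p^(t,h)_(n,k), aprev h k = a^(t,h)_k; dens h k x a = pi^(h)_k(x; a),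
  data x h n = x^(h)_n.\<close>
definition tau :: "nat \<Rightarrow> (nat \<Rightarrow> nat \<Rightarrow> 'x \<Rightarrow> 'a \<Rightarrow> real) \<Rightarrow> (nat \<Rightarrow> nat \<Rightarrow> 'x)
    \<Rightarrow> (nat \<Rightarrow> nat \<Rightarrow> nat \<Rightarrow> real) \<Rightarrow> (nat \<Rightarrow> nat \<Rightarrow> 'a) \<Rightarrow> nat \<Rightarrow> nat \<Rightarrow> nat \<Rightarrow> real" where
  "tau K dens x pprev aprev h n k =
     pprev h n k * dens h k (x h n) (aprev h k) / (\<Sum>j<K. pprev h n j * dens h j (x h n) (aprev h j))"

definition configs :: "nat \<Rightarrow> nat \<Rightarrow> nat \<Rightarrow> (nat \<Rightarrow> nat \<Rightarrow> nat) set" where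
  "configs H N K = (\<Pi>\<^sub>E h\<in>{..<H}. \<Pi>\<^sub>E n\<in>{..<N}. {..<K})"

text \<open>Conditional probability of a configuration given all data and the previous
  estimates: samples independent within a layer, layers conditionally independent.\<close>
definition config_prob :: "nat \<Rightarrow> nat \<Rightarrow> (nat \<Rightarrow> nat \<Rightarrow> nat \<Rightarrow> real)
    \<Rightarrow> (nat \<Rightarrow> nat \<Rightarrow> nat) \<Rightarrow> real" where
  "config_prob H N tt c = (\<Prod>h<H. \<Prod>n<N. tt h n (c h n))"

definition Bpar :: "(nat \<Rightarrow> nat \<Rightarrow> nat \<Rightarrow> (nat \<Rightarrow> nat \<Rightarrow> real) \<Rightarrow> real)
    \<Rightarrow> (nat \<Rightarrow> nat \<Rightarrow> nat) \<Rightarrow> nat \<Rightarrow> nat \<Rightarrow> nat \<Rightarrow> real" where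
  "Bpar f c h n k = f h n k (\<lambda>h' n'. kron k (c h' n')) - kron k (c h n) + 1"

text \<open>Completed log-posterior ell^(h) for layer h, mixing probabilities p n k,
  component parameters a k, configuration c:
   sum_n ln Dir(p_n | B_n) + sum_n sum_k delta [ln p_(n,k) + ln pi_k(x_n; a_k)],
  where ln Dir(p|b) = ln(normaliser) + sum_k (b_k - 1) ln p_k; the two terms in
  ln p_(n,k) (from the Dirichlet kernel and from the class indicator) are
  collected into one coefficient so that the extended-real sum is well defined.\<close>
definition loglik :: "nat \<Rightarrow> nat \<Rightarrow> (nat \<Rightarrow> nat \<Rightarrow> nat \<Rightarrow> (nat \<Rightarrow> nat \<Rightarrow> real) \<Rightarrow> real)
    \<Rightarrow> (nat \<Rightarrow> nat \<Rightarrow> 'x \<Rightarrow> 'a \<Rightarrow> real) \<Rightarrow> (nat \<Rightarrow> nat \<Rightarrow> 'x) \<Rightarrow> nat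
    \<Rightarrow> (nat \<Rightarrow> nat \<Rightarrow> real) \<Rightarrow> (nat \<Rightarrow> 'a) \<Rightarrow> (nat \<Rightarrow> nat \<Rightarrow> nat) \<Rightarrow> ereal" where
  "loglik N K f dens x h p a c =
     (\<Sum>n<N. ereal (ln (dir_norm K (Bpar f c h n)))
        + (\<Sum>k<K. ereal ((Bpar f c h n k - 1) + kron k (c h n)) * lnE (p n k)))
     + (\<Sum>n<N. \<Sum>k<K. ereal (kron k (c h n)) * lnE (dens h k (x h n) (a k)))"

definition Qfun :: "nat \<Rightarrow> nat \<Rightarrow> nat \<Rightarrow> (nat \<Rightarrow> nat \<Rightarrow> nat \<Rightarrow> (nat \<Rightarrow> nat \<Rightarrow> real) \<Rightarrow> real)
    \<Rightarrow> (nat \<Rightarrow> nat \<Rightarrow> 'x \<Rightarrow> 'a \<Rightarrow> real) \<Rightarrow> (nat \<Rightarrow> nat \<Rightarrow> 'x)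
    \<Rightarrow> (nat \<Rightarrow> nat \<Rightarrow> nat \<Rightarrow> real) \<Rightarrow> (nat \<Rightarrow> nat \<Rightarrow> 'a) \<Rightarrow> nat
    \<Rightarrow> (nat \<Rightarrow> nat \<Rightarrow> real) \<Rightarrow> (nat \<Rightarrow> 'a) \<Rightarrow> ereal" where
  "Qfun H N K f dens x pprev aprev h p a =
     (\<Sum>c\<in>configs H N K. ereal (config_prob H N (tau K dens x pprev aprev) c) * loglik N K f dens x h p a c)"

end

theory Submission
  imports Defs
begin

lemma ereal_sum_le_real:
  fixes t :: "'i \<Rightarrow> ereal"
  assumes "\<And>i. i \<in> I \<Longrightarrow> t i \<le> ereal (b i)"
  shows "sum t I \<le> ereal (sum b I)"
proof -
  have "sum t I \<le> (\<Sum>i\<in>I. ereal (b i))" by (rule sum_mono) (use assms in auto)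
  thus ?thesis by simp
qed

lemma ereal_sum_less_real:
  fixes t :: "'i \<Rightarrow> ereal"
  assumes fin: "finite I" and le: "\<And>i. i \<in> I \<Longrightarrow> t i \<le> ereal (b i)"
    and j: "j \<in> I" and ne: "t j \<noteq> ereal (b j)"
  shows "sum t I < ereal (sum b I)"
proof -
  have lt: "t j < ereal (b j)" using le[OF j] ne by auto
  obtain b' where b': "t j \<le> ereal b'" "b' < b j"
  proof (cases "t j")
    case (real r) thus ?thesis using that lt by auto
  next
    case PInf thus ?thesis using lt by auto
  next
    case MInf thus ?thesis using that[of "b j - 1"] by auto
  qed
  have "sum t I \<le> ereal (sum (b(j:=b')) I)"
    by (rule ereal_sum_le_real) (use le b' in auto)
  also have "sum (b(j:=b')) I < sum b I"
    by (rule sum_strict_mono_ex1) (use fin j b' in auto)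
  hence "ereal (sum (b(j:=b')) I) < ereal (sum b I)" by simp
  finally show ?thesis .
qed

lemma gibbs_term:
  fixes F S q p :: real
  assumes F: "0 \<le> F" and S: "0 < S" and q: "0 \<le> q" and p: "p = F / S"
  shows "ereal F * lnE q \<le> ereal (F * ln p + S * q - F)"
    and "ereal F * lnE q = ereal (F * ln p + S * q - F) \<Longrightarrow> q = p"
proof -
  have "ereal F * lnE q \<le> ereal (F * ln p + S * q - F) \<and>
        (ereal F * lnE q = ereal (F * ln p + S * q - F) \<longrightarrow> q = p)"
  proof (cases "F = 0")
    case True
    then show ?thesis using S q p by (auto simp: zero_ereal_def[symmetric])
  next
    case False
    hence Fp: "F > 0" using F by auto
    hence pp: "p > 0" using p S by auto
    have FS: "F / p = S" using p Fp S by auto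
    show ?thesis
    proof (cases "q = 0")
      case True thus ?thesis using pp Fp by (auto simp: lnE_def)
    next
      case False
      hence qp: "q > 0" using q by auto
      have le: "ln q - ln p \<le> (q - p) / p" using ln_diff_le[OF qp pp] .
      have e1: "F * ln q \<le> F * ln p + S * q - F"
      proof -
        have "F * (ln q - ln p) \<le> F * ((q - p) / p)" using mult_left_mono[OF le] Fp by auto
        also have "F * ((q - p) / p) = S * q - F" using FS pp by (simp add: field_simps)
        finally show ?thesis by (simp add: algebra_simps)
      qed
      have e2: "F * ln q = F * ln p + S * q - F \<Longrightarrow> q = p"
      proof (rule ccontr)
        assume eq: "F * ln q = F * ln p + S * q - F" and ne: "q \<noteq> p"
        have lt: "ln q - ln p < (q - p) / p" using ln_diff_less[OF qp pp ne] .
        have "F * (ln q - ln p) < F * ((q - p) / p)" using mult_strict_left_mono[OF lt Fp] .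
        also have "F * ((q - p) / p) = S * q - F" using FS pp by (simp add: field_simps)
        finally show False using eq by (simp add: algebra_simps)
      qed
      show ?thesis using qp e1 e2 by (simp add: lnE_def)
    qed
  qed
  thus "ereal F * lnE q \<le> ereal (F * ln p + S * q - F)"
    and "ereal F * lnE q = ereal (F * ln p + S * q - F) \<Longrightarrow> q = p" by auto
qed


lemma gibbs:
  fixes F q :: "nat \<Rightarrow> real" and K :: nat
  assumes F: "\<And>k. k < K \<Longrightarrow> 0 \<le> F k" and S: "0 < (\<Sum>k<K. F k)"
    and q: "q \<in> prob_simplex K"
  defines "p \<equiv> \<lambda>k. F k / (\<Sum>k<K. F k)"
  shows "(\<Sum>k<K. ereal (F k) * lnE (q k)) \<le> ereal (\<Sum>k<K. F k * ln (p k))"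
    and "(\<Sum>k<K. ereal (F k) * lnE (p k)) = ereal (\<Sum>k<K. F k * ln (p k))"
    and "(\<Sum>k<K. ereal (F k) * lnE (q k)) = ereal (\<Sum>k<K. F k * ln (p k)) \<Longrightarrow> \<forall>k<K. q k = p k"
proof -
  define S where "S = (\<Sum>k<K. F k)"
  have Sp: "S > 0" using S S_def by auto
  have q0: "\<And>k. k < K \<Longrightarrow> 0 \<le> q k" and q1: "(\<Sum>k<K. q k) = 1"
    using q by (auto simp: prob_simplex_def)
  define b where "b k = F k * ln (p k) + S * q k - F k" for k
  have pS: "p = (\<lambda>k. F k / S)" using p_def S_def by simp
  have bsum: "(\<Sum>k<K. b k) = (\<Sum>k<K. F k * ln (p k))"
  proof -
    have "(\<Sum>k<K. b k) = (\<Sum>k<K. F k * ln (p k)) + S * (\<Sum>k<K. q k) - S"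
      by (simp add: b_def sum.distrib sum_subtractf sum_distrib_left S_def)
    thus ?thesis using q1 by simp
  qed
  have tle: "\<And>k. k \<in> {..<K} \<Longrightarrow> ereal (F k) * lnE (q k) \<le> ereal (b k)"
    unfolding b_def using gibbs_term(1)[OF F Sp q0] pS by auto
  show "(\<Sum>k<K. ereal (F k) * lnE (q k)) \<le> ereal (\<Sum>k<K. F k * ln (p k))"
  proof -
    have "(\<Sum>k<K. ereal (F k) * lnE (q k)) \<le> ereal (\<Sum>k<K. b k)"
      by (rule ereal_sum_le_real) (rule tle)
    thus ?thesis using bsum by simp
  qed
  have "\<And>k. k < K \<Longrightarrow> ereal (F k) * lnE (p k) = ereal (F k * ln (p k))"
  proof -
    fix k assume k: "k < K"
    show "ereal (F k) * lnE (p k) = ereal (F k * ln (p k))"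
    proof (cases "F k = 0")
      case True thus ?thesis by (simp add: zero_ereal_def[symmetric])
    next
      case False hence "F k > 0" using F[OF k] by auto
      hence "p k > 0" using pS Sp by auto
      thus ?thesis by (simp add: lnE_def)
    qed
  qed
  thus "(\<Sum>k<K. ereal (F k) * lnE (p k)) = ereal (\<Sum>k<K. F k * ln (p k))" by simp
  assume eq: "(\<Sum>k<K. ereal (F k) * lnE (q k)) = ereal (\<Sum>k<K. F k * ln (p k))"
  show "\<forall>k<K. q k = p k"
  proof (intro allI impI)
    fix k assume k: "k < K"
    show "q k = p k"
    proof (rule ccontr)
      assume ne: "q k \<noteq> p k"
      have "ereal (F k) * lnE (q k) \<noteq> ereal (b k)"
        using gibbs_term(2)[OF F[OF k] Sp q0[OF k]] ne pS unfolding b_def by auto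
      hence "(\<Sum>k<K. ereal (F k) * lnE (q k)) < ereal (\<Sum>k<K. b k)"
        using ereal_sum_less_real[of "{..<K}" "\<lambda>k. ereal (F k) * lnE (q k)" b k] tle k by auto
      thus False using eq bsum by simp
    qed
  qed
qed

lemma lin_sum:
  assumes g: "linear_grid H N g" and fin: "finite C"
  shows "g (\<lambda>h n. \<Sum>c\<in>C. w c * u c h n) = (\<Sum>c\<in>C. w c * g (u c))"
  using fin
proof (induction C rule: finite_induct)
  case empty
  have "g (\<lambda>h n. 0 * u0 h n) = 0 * g u0" for u0 using g unfolding linear_grid_def by blast
  thus ?case by simp
next
  case (insert c C)
  have add: "g (\<lambda>h n. a h n + b h n) = g a + g b" for a b using g unfolding linear_grid_def by blast
  have hom: "g (\<lambda>h n. r * a h n) = r * g a" for r a using g unfolding linear_grid_def by blast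
  have "g (\<lambda>h n. \<Sum>c\<in>insert c C. w c * u c h n) =
        g (\<lambda>h n. w c * u c h n + (\<Sum>c\<in>C. w c * u c h n))"
    using insert by simp
  also have "\<dots> = g (\<lambda>h n. w c * u c h n) + g (\<lambda>h n. \<Sum>c\<in>C. w c * u c h n)"
    by (rule add)
  also have "\<dots> = w c * g (u c) + (\<Sum>c\<in>C. w c * g (u c))" using hom insert by simp
  finally show ?case using insert by simp
qed

lemma marginal:
  fixes tt :: "nat \<Rightarrow> nat \<Rightarrow> nat \<Rightarrow> real"
  assumes s1: "\<And>h n. h < H \<Longrightarrow> n < N \<Longrightarrow> (\<Sum>j<K. tt h n j) = 1"
    and h0: "h0 < H" and n0: "n0 < N" and k: "k < K"
  shows "(\<Sum>c\<in>configs H N K. config_prob H N tt c * kron k (c h0 n0)) = tt h0 n0 k"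
proof -
  define g where "g h n j = tt h n j * (if h = h0 \<and> n = n0 then kron k j else 1)" for h n j
  have eq1: "config_prob H N tt c * kron k (c h0 n0) = (\<Prod>h<H. \<Prod>n<N. g h n (c h n))" for c
  proof -
    have "(\<Prod>h<H. \<Prod>n<N. g h n (c h n)) =
          (\<Prod>h<H. \<Prod>n<N. tt h n (c h n)) * (\<Prod>h<H. \<Prod>n<N. (if h = h0 \<and> n = n0 then kron k (c h n) else 1))"
      by (simp add: g_def prod.distrib)
    also have "(\<Prod>h<H. \<Prod>n<N. (if h = h0 \<and> n = n0 then kron k (c h n) else 1)) =
               (\<Prod>h<H. if h = h0 then kron k (c h0 n0) else 1)"
      by (rule prod.cong) (use n0 in auto)
    also have "\<dots> = kron k (c h0 n0)" using h0 by simp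
    finally show ?thesis by (simp add: config_prob_def)
  qed
  have "(\<Sum>c\<in>configs H N K. config_prob H N tt c * kron k (c h0 n0))
      = (\<Sum>c\<in>configs H N K. \<Prod>h<H. \<Prod>n<N. g h n (c h n))" using eq1 by simp
  also have "\<dots> = (\<Prod>h<H. \<Sum>ch\<in>(\<Pi>\<^sub>E n\<in>{..<N}. {..<K}). \<Prod>n<N. g h n (ch n))"
    unfolding configs_def by (rule prod_sum_PiE[symmetric]) (auto simp: finite_PiE)
  also have "\<dots> = (\<Prod>h<H. \<Prod>n<N. \<Sum>j<K. g h n j)"
    by (rule prod.cong[OF refl], rule prod_sum_PiE[symmetric]) auto
  also have "\<dots> = (\<Prod>h<H. \<Prod>n<N. if h = h0 \<and> n = n0 then tt h0 n0 k else 1)"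
  proof (intro prod.cong refl)
    fix h n assume "h \<in> {..<H}" "n \<in> {..<N}"
    hence hn: "h < H" "n < N" by auto
    show "(\<Sum>j<K. g h n j) = (if h = h0 \<and> n = n0 then tt h0 n0 k else 1)"
    proof (cases "h = h0 \<and> n = n0")
      case True
      have "(\<Sum>j<K. g h n j) = (\<Sum>j<K. if j = k then tt h0 n0 j else 0)"
        by (rule sum.cong) (auto simp: g_def kron_def True)
      also have "\<dots> = tt h0 n0 k" using k by (simp add: sum.delta)
      finally show ?thesis using True by simp
    next
      case False
      have "g h n j = tt h n j" for j using False by (auto simp: g_def)
      thus ?thesis using s1[OF hn] False by auto
    qed
  qed
  also have "\<dots> = tt h0 n0 k"
  proof -
    have "(\<Prod>h<H. \<Prod>n<N. if h = h0 \<and> n = n0 then tt h0 n0 k else 1) =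
          (\<Prod>h<H. if h = h0 then tt h0 n0 k else 1)"
      by (rule prod.cong) (use n0 in auto)
    thus ?thesis using h0 by simp
  qed
  finally show ?thesis .
qed


lemma ereal_nn_distrib:
  assumes "0 \<le> w" shows "ereal w * (a + b) = ereal w * a + ereal w * b"
  using assms by (cases a; cases b) (auto simp: distrib_left)

lemma ereal_nn_sum_distrib:
  assumes "0 \<le> w" shows "ereal w * sum g A = (\<Sum>x\<in>A. ereal w * g x)"
  by (induction A rule: infinite_finite_induct) (auto simp: ereal_nn_distrib[OF assms])

lemma ereal_nn_sum_distrib_right:
  assumes "\<And>x. x \<in> A \<Longrightarrow> 0 \<le> \<beta> x"
  shows "(\<Sum>x\<in>A. ereal (\<beta> x) * z) = ereal (sum \<beta> A) * z"
proof -
  have "(\<Sum>x\<in>A. ereal (\<beta> x)) * z = (\<Sum>x\<in>A. ereal (\<beta> x) * z)"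
    by (rule sum_ereal_left_distrib) (use assms in auto)
  thus ?thesis by simp
qed

lemma ereal_nn_mult_not_inf:
  assumes "0 \<le> w" "z \<noteq> \<infinity>" shows "ereal w * z \<noteq> \<infinity>"
  using assms by (cases z) auto

lemma lnE_not_inf: "lnE y \<noteq> \<infinity>" by (simp add: lnE_def)

lemma Q_decomp:
  fixes tt :: "nat \<Rightarrow> nat \<Rightarrow> nat \<Rightarrow> real"
  assumes tt: "tt = tau K dens x pprev aprev"
    and wnn: "\<And>c. c \<in> configs H N K \<Longrightarrow> 0 \<le> config_prob H N tt c"
    and fnn: "\<And>c n k. c \<in> configs H N K \<Longrightarrow> n < N \<Longrightarrow> k < K \<Longrightarrow>
                 0 \<le> f h n k (\<lambda>h' n'. kron k (c h' n'))"
  shows "\<exists>A. A \<noteq> \<infinity> \<and> (\<forall>p. Qfun H N K f dens x pprev aprev h p a =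
     A + (\<Sum>n<N. \<Sum>k<K. ereal (\<Sum>c\<in>configs H N K. config_prob H N tt c *
             f h n k (\<lambda>h' n'. kron k (c h' n'))) * lnE (p n k)))"
proof -
  define w where "w c = config_prob H N tt c" for c
  define D where "D c = (\<Sum>n<N. ln (dir_norm K (Bpar f c h n)))" for c
  define E where "E c = (\<Sum>n<N. \<Sum>k<K. ereal (kron k (c h n)) * lnE (dens h k (x h n) (a k)))" for c
  define al where "al c n k = f h n k (\<lambda>h' n'. kron k (c h' n'))" for c n k
  define G where "G c p = (\<Sum>n<N. \<Sum>k<K. ereal (al c n k) * lnE (p n k))" for c and p :: "nat \<Rightarrow> nat \<Rightarrow> real"
  define A where "A = (\<Sum>c\<in>configs H N K. ereal (w c * D c) + ereal (w c) * E c)"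
  have ll: "loglik N K f dens x h p a c = ereal (D c) + G c p + E c" for c p
  proof -
    have "loglik N K f dens x h p a c =
       (\<Sum>n<N. ereal (ln (dir_norm K (Bpar f c h n))) + (\<Sum>k<K. ereal (al c n k) * lnE (p n k))) + E c"
      by (simp add: loglik_def E_def al_def Bpar_def)
    also have "\<dots> = ereal (D c) + G c p + E c"
      by (simp add: sum.distrib D_def G_def)
    finally show ?thesis .
  qed
  have Enot: "E c \<noteq> \<infinity>" for c
    unfolding E_def by (auto simp: sum_Pinfty kron_def lnE_not_inf intro!: ereal_nn_mult_not_inf)
  have Anot: "A \<noteq> \<infinity>"
  proof -
    have "ereal (w c) * E c \<noteq> \<infinity>" if "c \<in> configs H N K" for c
      using ereal_nn_mult_not_inf[OF wnn[OF that] Enot[of c]] by (simp add: w_def)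
    thus ?thesis unfolding A_def by (auto simp: sum_Pinfty)
  qed
  have "Qfun H N K f dens x pprev aprev h p a =
     A + (\<Sum>n<N. \<Sum>k<K. ereal (\<Sum>c\<in>configs H N K. w c * al c n k) * lnE (p n k))" for p
  proof -
    have "Qfun H N K f dens x pprev aprev h p a = (\<Sum>c\<in>configs H N K. ereal (w c) * loglik N K f dens x h p a c)"
      by (simp add: Qfun_def w_def tt)
    also have "\<dots> = (\<Sum>c\<in>configs H N K. (ereal (w c * D c) + ereal (w c) * E c) + ereal (w c) * G c p)"
    proof (rule sum.cong[OF refl])
      fix c assume c: "c \<in> configs H N K"
      have w0: "0 \<le> w c" using wnn[OF c] by (simp add: w_def)
      show "ereal (w c) * loglik N K f dens x h p a c = (ereal (w c * D c) + ereal (w c) * E c) + ereal (w c) * G c p"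
        unfolding ll using w0 by (simp add: ereal_nn_distrib add_ac)
    qed
    also have "\<dots> = A + (\<Sum>c\<in>configs H N K. ereal (w c) * G c p)"
      by (simp add: sum.distrib A_def)
    also have "(\<Sum>c\<in>configs H N K. ereal (w c) * G c p) =
        (\<Sum>c\<in>configs H N K. \<Sum>n<N. \<Sum>k<K. ereal (w c * al c n k) * lnE (p n k))"
    proof (rule sum.cong[OF refl])
      fix c assume c: "c \<in> configs H N K"
      have w0: "0 \<le> w c" using wnn[OF c] by (simp add: w_def)
      show "ereal (w c) * G c p = (\<Sum>n<N. \<Sum>k<K. ereal (w c * al c n k) * lnE (p n k))"
        unfolding G_def using w0
        by (simp add: ereal_nn_sum_distrib mult.assoc[symmetric])
    qed
    also have "\<dots> = (\<Sum>n<N. \<Sum>k<K. \<Sum>c\<in>configs H N K. ereal (w c * al c n k) * lnE (p n k))"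
      by (subst sum.swap) (subst sum.swap, rule refl)
    also have "\<dots> = (\<Sum>n<N. \<Sum>k<K. ereal (\<Sum>c\<in>configs H N K. w c * al c n k) * lnE (p n k))"
    proof (intro sum.cong refl)
      fix n k assume "n \<in> {..<N}" "k \<in> {..<K}"
      thus "(\<Sum>c\<in>configs H N K. ereal (w c * al c n k) * lnE (p n k)) =
            ereal (\<Sum>c\<in>configs H N K. w c * al c n k) * lnE (p n k)"
        by (intro ereal_nn_sum_distrib_right) (use wnn fnn in \<open>auto simp: w_def al_def\<close>)
    qed
    finally show ?thesis .
  qed
  thus ?thesis using Anot unfolding w_def al_def by blast
qed

theorem proposition3:
  fixes H N K :: nat
    and f :: "nat \<Rightarrow> nat \<Rightarrow> nat \<Rightarrow> (nat \<Rightarrow> nat \<Rightarrow> real) \<Rightarrow> real"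
    and dens :: "nat \<Rightarrow> nat \<Rightarrow> 'x \<Rightarrow> 'a \<Rightarrow> real"
    and x :: "nat \<Rightarrow> nat \<Rightarrow> 'x"
    and pprev :: "nat \<Rightarrow> nat \<Rightarrow> nat \<Rightarrow> real"
    and aprev :: "nat \<Rightarrow> nat \<Rightarrow> 'a"
    and h :: nat
  assumes f_lin: "\<And>h n k. h < H \<Longrightarrow> n < N \<Longrightarrow> k < K \<Longrightarrow> linear_grid H N (f h n k)"
    and f_nonneg: "\<And>h n k. h < H \<Longrightarrow> n < N \<Longrightarrow> k < K \<Longrightarrow> nonneg_grid H N (f h n k)"
    and pi_nonneg: "\<And>h k y b. h < H \<Longrightarrow> k < K \<Longrightarrow> 0 \<le> dens h k y b"
    and pt_simplex: "\<And>h n. h < H \<Longrightarrow> n < N \<Longrightarrow> pprev h n \<in> prob_simplex K"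
    and evidence_pos: "\<And>h n. h < H \<Longrightarrow> n < N \<Longrightarrow>
           0 < (\<Sum>j<K. pprev h n j * dens h j (x h n) (aprev h j))"
    and denom_pos: "\<And>n. n < N \<Longrightarrow>
           0 < (\<Sum>k'<K. f h n k' (\<lambda>h' n'. tau K dens x pprev aprev h' n' k'))"
    and h: "h < H"
  defines "pnew \<equiv> \<lambda>n k. f h n k (\<lambda>h' n'. tau K dens x pprev aprev h' n' k)
              / (\<Sum>k'<K. f h n k' (\<lambda>h' n'. tau K dens x pprev aprev h' n' k'))"
  shows "(\<forall>n<N. pnew n \<in> prob_simplex K)
     \<and> (\<forall>a q. (\<forall>n<N. q n \<in> prob_simplex K) \<longrightarrow>
            Qfun H N K f dens x pprev aprev h q a \<le> Qfun H N K f dens x pprev aprev h pnew a)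
     \<and> (\<forall>a q. (\<forall>n<N. q n \<in> prob_simplex K) \<longrightarrow> Qfun H N K f dens x pprev aprev h pnew a \<noteq> - \<infinity> \<longrightarrow>
            Qfun H N K f dens x pprev aprev h q a = Qfun H N K f dens x pprev aprev h pnew a \<longrightarrow>
            (\<forall>n<N. \<forall>k<K. q n k = pnew n k))"
proof -
  define tt where "tt = tau K dens x pprev aprev"
  have tt_nn: "0 \<le> tt h' n' k" if "h' < H" "n' < N" "k < K" for h' n' k
  proof -
    have "0 \<le> pprev h' n' k" using pt_simplex[OF that(1,2)] that(3) by (auto simp: prob_simplex_def)
    moreover have "0 \<le> dens h' k (x h' n') (aprev h' k)" using pi_nonneg that by auto
    ultimately show ?thesis using evidence_pos[OF that(1,2)] unfolding tt_def tau_def by simp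
  qed
  have tt_sum: "(\<Sum>j<K. tt h' n' j) = 1" if "h' < H" "n' < N" for h' n'
  proof -
    have "(\<Sum>j<K. tt h' n' j) = (\<Sum>j<K. pprev h' n' j * dens h' j (x h' n') (aprev h' j)) /
          (\<Sum>j<K. pprev h' n' j * dens h' j (x h' n') (aprev h' j))"
      unfolding tt_def tau_def by (rule sum_divide_distrib[symmetric])
    thus ?thesis using evidence_pos[OF that] by simp
  qed
  have cfg: "c h' n' < K" if "c \<in> configs H N K" "h' < H" "n' < N" for c h' n'
    using that by (auto simp: configs_def PiE_iff)
  have wnn: "0 \<le> config_prob H N tt c" if "c \<in> configs H N K" for c
    unfolding config_prob_def using tt_nn cfg[OF that] by (auto intro!: prod_nonneg)
  have fnn: "0 \<le> f h n k (\<lambda>h' n'. kron k (c h' n'))" if "c \<in> configs H N K" "n < N" "k < K" for c n k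
    using f_nonneg[OF h that(2,3)] unfolding nonneg_grid_def by (auto simp: kron_def)
  have finc: "finite (configs H N K)" by (simp add: configs_def finite_PiE)
  define Fn where "Fn n k = f h n k (\<lambda>h' n'. tt h' n' k)" for n k
  have Fn_eq: "(\<Sum>c\<in>configs H N K. config_prob H N tt c * f h n k (\<lambda>h' n'. kron k (c h' n'))) = Fn n k"
    if n: "n < N" and k: "k < K" for n k
  proof -
    have lin: "linear_grid H N (f h n k)" using f_lin[OF h n k] .
    have "(\<Sum>c\<in>configs H N K. config_prob H N tt c * f h n k (\<lambda>h' n'. kron k (c h' n'))) =
          f h n k (\<lambda>h' n'. \<Sum>c\<in>configs H N K. config_prob H N tt c * kron k (c h' n'))"
      using lin_sum[OF lin finc, of "config_prob H N tt" "\<lambda>c h' n'. kron k (c h' n')"] by simp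
    also have "\<dots> = f h n k (\<lambda>h' n'. tt h' n' k)"
    proof -
      have M: "\<forall>h'<H. \<forall>n'<N. (\<Sum>c\<in>configs H N K. config_prob H N tt c * kron k (c h' n')) = tt h' n' k"
        using marginal[where tt=tt and H=H and N=N and K=K, OF tt_sum _ _ k] by blast
      have C: "\<forall>u v. (\<forall>h<H. \<forall>n<N. u h n = v h n) \<longrightarrow> f h n k u = f h n k v"
        using lin unfolding linear_grid_def by blast
      show ?thesis
        by (rule mp[OF spec[OF spec[OF C]]]) (use M in auto)
    qed
    finally show ?thesis by (simp add: Fn_def)
  qed
  have Fn_nn: "0 \<le> Fn n k" if "n < N" "k < K" for n k
    using f_nonneg[OF h that] tt_nn that unfolding nonneg_grid_def Fn_def by auto
  have Spos: "0 < (\<Sum>k<K. Fn n k)" if "n < N" for n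
    using denom_pos[OF that] by (simp add: Fn_def tt_def)
  have pnew_eq: "pnew n = (\<lambda>k. Fn n k / (\<Sum>k<K. Fn n k))" for n
    by (simp add: pnew_def Fn_def tt_def)
  have part1: "\<forall>n<N. pnew n \<in> prob_simplex K"
  proof (intro allI impI)
    fix n assume n: "n < N"
    have "(\<Sum>k<K. Fn n k / (\<Sum>k<K. Fn n k)) = 1"
      using Spos[OF n] by (simp add: sum_divide_distrib[symmetric])
    thus "pnew n \<in> prob_simplex K"
      using Fn_nn[OF n] Spos[OF n] unfolding pnew_eq prob_simplex_def by auto
  qed
  have main: "(\<forall>q. (\<forall>n<N. q n \<in> prob_simplex K) \<longrightarrow>
            Qfun H N K f dens x pprev aprev h q a \<le> Qfun H N K f dens x pprev aprev h pnew a)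
     \<and> (\<forall>q. (\<forall>n<N. q n \<in> prob_simplex K) \<longrightarrow> Qfun H N K f dens x pprev aprev h pnew a \<noteq> - \<infinity> \<longrightarrow>
            Qfun H N K f dens x pprev aprev h q a = Qfun H N K f dens x pprev aprev h pnew a \<longrightarrow>
            (\<forall>n<N. \<forall>k<K. q n k = pnew n k))" for a
  proof -
    obtain A where Anot: "A \<noteq> \<infinity>" and QA: "\<And>p. Qfun H N K f dens x pprev aprev h p a =
       A + (\<Sum>n<N. \<Sum>k<K. ereal (\<Sum>c\<in>configs H N K. config_prob H N tt c *
               f h n k (\<lambda>h' n'. kron k (c h' n'))) * lnE (p n k))"
      using Q_decomp[where f=f and h=h and a=a and H=H and N=N and K=K, OF tt_def wnn fnn] by blast
    define G where "G p = (\<Sum>n<N. \<Sum>k<K. ereal (Fn n k) * lnE (p n k))" for p :: "nat \<Rightarrow> nat \<Rightarrow> real"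
    have QF: "Qfun H N K f dens x pprev aprev h p a = A + G p" for p
      unfolding QA G_def by (intro arg_cong2[where f="(+)"] refl sum.cong) (auto simp: Fn_eq)
    define r where "r n = (\<Sum>k<K. Fn n k * ln (pnew n k))" for n
    have Gn_new: "(\<Sum>k<K. ereal (Fn n k) * lnE (pnew n k)) = ereal (r n)" if "n < N" for n
      using gibbs(2)[of K "Fn n", OF Fn_nn[OF that] Spos[OF that] part1[rule_format, OF that]]
      unfolding r_def pnew_eq by simp
    have Gnew: "G pnew = ereal (\<Sum>n<N. r n)"
      unfolding G_def using Gn_new by simp
    have Gn_le: "(\<Sum>k<K. ereal (Fn n k) * lnE (q n k)) \<le> ereal (r n)"
      and Gn_eq: "(\<Sum>k<K. ereal (Fn n k) * lnE (q n k)) = ereal (r n) \<Longrightarrow> \<forall>k<K. q n k = pnew n k"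
      if "n < N" "q n \<in> prob_simplex K" for n q
      using gibbs[of K "Fn n", OF Fn_nn[OF that(1)] Spos[OF that(1)] that(2)]
      unfolding r_def pnew_eq by simp_all
    have Gle: "G q \<le> G pnew" if "\<forall>n<N. q n \<in> prob_simplex K" for q
    proof -
      have "G q \<le> ereal (\<Sum>n<N. r n)"
        unfolding G_def by (rule ereal_sum_le_real) (use Gn_le that in auto)
      thus ?thesis using Gnew by simp
    qed
    show ?thesis
    proof (intro conjI allI impI)
      fix q assume q: "\<forall>n<N. q n \<in> prob_simplex K"
      show "Qfun H N K f dens x pprev aprev h q a \<le> Qfun H N K f dens x pprev aprev h pnew a"
        unfolding QF using Gle[OF q] by (rule add_left_mono)
    next
      fix q n k assume q: "\<forall>n<N. q n \<in> prob_simplex K"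
        and nm: "Qfun H N K f dens x pprev aprev h pnew a \<noteq> - \<infinity>"
        and eq: "Qfun H N K f dens x pprev aprev h q a = Qfun H N K f dens x pprev aprev h pnew a"
        and n: "n < N" and k: "k < K"
      have "A \<noteq> - \<infinity>" using nm unfolding QF Gnew by auto
      then obtain a0 where a0: "A = ereal a0" using Anot by (cases A) auto
      have GG: "G q = G pnew" using eq unfolding QF a0 Gnew
        by (cases "G q") auto
      have "\<forall>k<K. q n k = pnew n k"
      proof (rule Gn_eq[where q=q, OF n q[rule_format, OF n]], rule ccontr)
        assume ne: "(\<Sum>k<K. ereal (Fn n k) * lnE (q n k)) \<noteq> ereal (r n)"
        have "G q < ereal (\<Sum>n<N. r n)"
          unfolding G_def
          using ereal_sum_less_real[of "{..<N}" "\<lambda>n. \<Sum>k<K. ereal (Fn n k) * lnE (q n k)" r n]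
            Gn_le q n ne by auto
        thus False using GG Gnew by simp
      qed
      thus "q n k = pnew n k" using k by blast
    qed
  qed
  show ?thesis using part1 main by blast
qed

end
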